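(* Let $Z$ be a random variable and $M\ge0$ a random variable, and let $C,D$ be constants such that for every $\kappa>0$ and $\delta\in(0,1)$, $\Pr\big[Z\ge C(\kappa+M)\sqrt{\log(1/\delta)+D+\log(1+M/\kappa)}\big]\le\delta$. Then for any $\beta,\kappa>0$ and $\delta\in(0,1)$, \[ \Pr\Big[Z\ge C((1+\beta)M+\kappa)\sqrt{\log\tfrac2\delta+2\,\mathrm{lil}\big(\tfrac{\beta M}{\kappa}\big)+D+\log\big(1+\tfrac e\beta\big)}\Big]\le\delta. \] In particular, if $D\gtrsim1$, then taking $\beta=1$, $\Pr\big[Z\gtrsim C(M+\kappa)\sqrt{\log\frac1\delta+\mathrm{lil}(\frac M\kappa)+D}\big]\le\delta$.
   Context: $\log_+x:=\max\{1,\log x\}$, $\mathrm{lil}(x):=\log_+(\log_+x)$. $\lesssim,\gtrsim$ hide universal constants. *)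

theory Defs
  imports "HOL-Probability.Probability"
begin

definition log_plus :: "real \<Rightarrow> real" where
  "log_plus x = max 1 (ln x)"

definition lil :: "real \<Rightarrow> real" where
  "lil x = log_plus (log_plus x)"

end

theory Submission
  imports Defs "HOL-Real_Asymp.Real_Asymp"
begin

lemma exp_lil_ge: "exp (lil r) \<ge> exp 1" "r > 0 \<Longrightarrow> exp (lil r) \<ge> ln r"
proof -
  show "exp (lil r) \<ge> exp 1" unfolding lil_def log_plus_def by simp
  have "lil r \<ge> ln (log_plus r)" unfolding lil_def log_plus_def by simp
  then have "exp (lil r) \<ge> exp (ln (log_plus r))" by simp
  also have "exp (ln (log_plus r)) = log_plus r" unfolding log_plus_def by simp
  also have "log_plus r \<ge> ln r" unfolding log_plus_def by simp
  finally show "exp (lil r) \<ge> ln r" .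
qed

lemma key:
  fixes C D \<beta> \<kappa> \<delta> m :: real
  assumes C: "C > 0" and D: "D \<ge> 0" and b: "\<beta> > 0" and ka: "\<kappa> > 0" and d: "0 < \<delta>" "\<delta> < 1" and m: "m \<ge> 0"
  defines "r \<equiv> \<beta> * m / \<kappa>"
  defines "k \<equiv> nat \<lceil>ln r - 1\<rceil>"
  shows "C * (\<kappa> * exp (real k) + m) * sqrt (ln (1 / (2 * \<delta> / ((real k + 2) * (real k + 3)))) + D + ln (1 + m / (\<kappa> * exp (real k))))
     \<le> C * ((1 + \<beta>) * m + \<kappa>) * sqrt (ln (2 / \<delta>) + 2 * lil r + D + ln (1 + exp 1 / \<beta>))"
proof -
  have r0: "r \<ge> 0" unfolding r_def using b ka m by simp
  have F1: "exp (real k) \<le> 1 + r"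
  proof (cases "k = 0")
    case True then show ?thesis using r0 by simp
  next
    case False
    then have "real k < ln r" unfolding k_def by linarith
    moreover have "r > 0" using False r0 unfolding k_def by (cases "r = 0") auto
    ultimately have "exp (real k) < r" by (metis exp_less_cancel_iff exp_ln)
    then show ?thesis by simp
  qed
  have F2: "r \<le> exp (real k + 1)"
  proof (cases "r = 0")
    case True then show ?thesis by simp
  next
    case False
    then have "r > 0" using r0 by simp
    have "ln r \<le> real k + 1" unfolding k_def by linarith
    then show ?thesis using \<open>r > 0\<close> by (metis exp_le_cancel_iff exp_ln)
  qed
  have F3: "(real k + 2) * (real k + 3) / 4 \<le> exp (lil r) ^ 2"
  proof (cases "k \<le> 2")
    case True
    then have "(real k + 2) * (real k + 3) / 4 \<le> 5"
    proof -
      have "real k \<le> 2" using True by simp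
      then have "(real k + 2) * (real k + 3) \<le> 4 * 5" by (intro mult_mono) auto
      then show ?thesis by simp
    qed
    also have "(5::real) \<le> exp 1 ^ 2"
    proof -
      have "exp 1 \<ge> (2.7::real)" using e_approx_32 unfolding abs_le_iff by simp
      then have "exp 1 * exp 1 \<ge> (2.7::real) * 2.7" by (intro mult_mono) auto
      then show ?thesis by (simp add: power2_eq_square)
    qed
    also have "exp 1 ^ 2 \<le> exp (lil r) ^ 2" using exp_lil_ge(1)[of r] by (intro power_mono) auto
    finally show ?thesis .
  next
    case False
    then have "real k < ln r" unfolding k_def by linarith
    moreover have "r > 0" using False r0 unfolding k_def by (cases "r = 0") auto
    ultimately have "real k \<le> exp (lil r)" using exp_lil_ge(2)[of r] by linarith
    then have q1: "real k ^ 2 \<le> exp (lil r) ^ 2" by (intro power_mono) auto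
    have q2: "(real k + 2) * (real k + 3) \<le> 4 * real k ^ 2"
    proof -
      have "real k \<ge> 3" using False by simp
      then have h: "real k * real k \<ge> 3 * real k" by (intro mult_right_mono) auto
      have "(real k + 2) * (real k + 3) = real k * real k + 5 * real k + 6" by (simp add: algebra_simps)
      also have "\<dots> \<le> 4 * (real k * real k)" using h \<open>real k \<ge> 3\<close> by linarith
      finally show ?thesis by (simp add: power2_eq_square)
    qed
    from q1 q2 show ?thesis by linarith
  qed
  have A: "\<kappa> * exp (real k) + m \<le> (1 + \<beta>) * m + \<kappa>"
  proof -
    have "\<kappa> * exp (real k) \<le> \<kappa> * (1 + r)" using F1 ka by simp
    also have "\<kappa> * (1 + r) = \<kappa> + \<beta> * m" unfolding r_def using ka by (simp add: field_simps)
    finally show ?thesis by (simp add: algebra_simps)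
  qed
  have B: "ln (1 + m / (\<kappa> * exp (real k))) \<le> ln (1 + exp 1 / \<beta>)"
  proof -
    have "m / (\<kappa> * exp (real k)) = r / (\<beta> * exp (real k))" unfolding r_def using ka b by (simp add: field_simps)
    also have "\<dots> \<le> exp (real k + 1) / (\<beta> * exp (real k))" using F2 b by (intro divide_right_mono) auto
    also have "\<dots> = exp 1 / \<beta>" using b by (simp add: exp_add field_simps)
    finally have h: "m / (\<kappa> * exp (real k)) \<le> exp 1 / \<beta>" .
    have "0 \<le> m / (\<kappa> * exp (real k))" using ka m by simp
    moreover have "0 \<le> exp 1 / \<beta>" using b by simp
    ultimately show ?thesis using h by (subst ln_le_cancel_iff) auto
  qed
  have Cc: "ln (1 / (2 * \<delta> / ((real k + 2) * (real k + 3)))) \<le> ln (2 / \<delta>) + 2 * lil r"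
  proof -
    have "1 / (2 * \<delta> / ((real k + 2) * (real k + 3))) = (2 / \<delta>) * ((real k + 2) * (real k + 3) / 4)"
      using d by (simp add: field_simps)
    then have "ln (1 / (2 * \<delta> / ((real k + 2) * (real k + 3)))) = ln ((2 / \<delta>) * ((real k + 2) * (real k + 3) / 4))"
      by (simp only:)
    also have "\<dots> = ln (2 / \<delta>) + ln ((real k + 2) * (real k + 3) / 4)"
      using d by (intro ln_mult_pos) auto
    also have "ln ((real k + 2) * (real k + 3) / 4) \<le> ln (exp (lil r) ^ 2)"
      using F3 by (subst ln_le_cancel_iff) auto
    also have "ln (exp (lil r) ^ 2) = 2 * lil r" by (simp add: ln_realpow)
    finally show ?thesis by simp
  qed
  have s0: "0 \<le> ln (1 / (2 * \<delta> / ((real k + 2) * (real k + 3)))) + D + ln (1 + m / (\<kappa> * exp (real k)))"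
  proof -
    have "2 * \<delta> / ((real k + 2) * (real k + 3)) \<le> 1"
    proof -
      have "(2::real) \<le> (real k + 2) * (real k + 3)" by (simp add: algebra_simps)
      then have "2 * \<delta> \<le> (real k + 2) * (real k + 3)" using d by linarith
      then show ?thesis by (simp add: divide_le_eq)
    qed
    then have "0 \<le> ln (1 / (2 * \<delta> / ((real k + 2) * (real k + 3))))" using d by (simp add: ln_div)
    moreover have "0 \<le> ln (1 + m / (\<kappa> * exp (real k)))" using m ka by simp
    ultimately show ?thesis using D by linarith
  qed
  show ?thesis
  proof (rule mult_mono)
    show "C * (\<kappa> * exp (real k) + m) \<le> C * ((1 + \<beta>) * m + \<kappa>)" using A C by simp
    show "sqrt (ln (1 / (2 * \<delta> / ((real k + 2) * (real k + 3)))) + D + ln (1 + m / (\<kappa> * exp (real k))))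
     \<le> sqrt (ln (2 / \<delta>) + 2 * lil r + D + ln (1 + exp 1 / \<beta>))" using B Cc by simp
    show "0 \<le> C * ((1 + \<beta>) * m + \<kappa>)" using C b ka m by simp
    show "0 \<le> sqrt (ln (1 / (2 * \<delta> / ((real k + 2) * (real k + 3)))) + D + ln (1 + m / (\<kappa> * exp (real k))))"
      using s0 by simp
  qed
qed


lemma lil_measurable[measurable]: "lil \<in> borel_measurable borel"
proof -
  have "lil = (\<lambda>x. max 1 (ln (max 1 (ln x))))" unfolding lil_def log_plus_def by (rule ext) simp
  moreover have "(\<lambda>x::real. max 1 (ln (max 1 (ln x)))) \<in> borel_measurable borel" by measurable
  ultimately show ?thesis by simp
qed

lemma no_hyp:
  assumes P: "prob_space P" and Zm: "Z \<in> borel_measurable P" and Mm: "M \<in> borel_measurable P"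
    and d0: "(\<delta>0::real) < 1"
    and A: "\<And>n::nat. measure P {\<omega>\<in>space P. - real n \<le> Z \<omega> \<and> M \<omega> \<le> real n} \<le> \<delta>0"
  shows False
proof -
  interpret prob_space P by fact
  define A where "A n = {\<omega>\<in>space P. - real n \<le> Z \<omega> \<and> M \<omega> \<le> real n}" for n :: nat
  have sets: "range A \<subseteq> sets P" unfolding A_def using Zm Mm by auto
  have inc: "incseq A" unfolding A_def incseq_def by force
  have un: "(\<Union>i. A i) = space P"
  proof
    show "(\<Union>i. A i) \<subseteq> space P" unfolding A_def by auto
    show "space P \<subseteq> (\<Union>i. A i)"
    proof
      fix \<omega> assume w: "\<omega> \<in> space P"
      obtain n :: nat where "max \<bar>Z \<omega>\<bar> \<bar>M \<omega>\<bar> < real n" using reals_Archimedean2 by blast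
      then have "\<omega> \<in> A n" unfolding A_def using w by auto
      then show "\<omega> \<in> (\<Union>i. A i)" by blast
    qed
  qed
  have "(\<lambda>i. measure P (A i)) \<longlonglongrightarrow> measure P (\<Union>i. A i)"
    by (rule finite_Lim_measure_incseq[OF sets inc])
  then have "(\<lambda>i. measure P (A i)) \<longlonglongrightarrow> 1" using un prob_space by simp
  moreover have "\<And>i. measure P (A i) \<le> \<delta>0" unfolding A_def by (rule A)
  ultimately have "1 \<le> \<delta>0" by (intro LIMSEQ_le_const2) auto
  then show False using d0 by simp
qed

lemma dk_sums: "(\<lambda>k::nat. 2 * \<delta> / ((real k + 2) * (real k + 3))) sums (\<delta>::real)"
proof -
  define f where "f n = 2 * \<delta> / (real n + 2)" for n :: nat
  have "f \<longlonglongrightarrow> 0" unfolding f_def by real_asymp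
  then have "(\<lambda>n. f n - f (Suc n)) sums (f 0 - 0)" by (rule telescope_sums')
  moreover have "\<And>n. f n - f (Suc n) = 2 * \<delta> / ((real n + 2) * (real n + 3))"
    unfolding f_def by (simp add: field_simps)
  moreover have "f 0 = \<delta>" unfolding f_def by simp
  ultimately show ?thesis by simp
qed

theorem lemma9:
  fixes P :: "'a measure" and Z M :: "'a \<Rightarrow> real" and C D :: real
  assumes "prob_space P"
    and "Z \<in> borel_measurable P" and "M \<in> borel_measurable P"
    and "\<And>\<omega>. \<omega> \<in> space P \<Longrightarrow> M \<omega> \<ge> 0"
    and hyp: "\<And>\<kappa> \<delta>. \<kappa> > 0 \<Longrightarrow> 0 < \<delta> \<Longrightarrow> \<delta> < 1 \<Longrightarrow>
      measure P {\<omega> \<in> space P. Z \<omega> \<ge> C * (\<kappa> + M \<omega>) *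
         sqrt (ln (1 / \<delta>) + D + ln (1 + M \<omega> / \<kappa>))} \<le> \<delta>"
    and "\<beta> > 0" and "\<kappa> > 0" and "0 < \<delta>" and "\<delta> < 1"
  shows "measure P {\<omega> \<in> space P. Z \<omega> \<ge> C * ((1 + \<beta>) * M \<omega> + \<kappa>) *
         sqrt (ln (2 / \<delta>) + 2 * lil (\<beta> * M \<omega> / \<kappa>) + D + ln (1 + exp 1 / \<beta>))} \<le> \<delta>"
proof -
  note P = assms(1) and Zm = assms(2) and Mm = assms(3) and M0 = assms(4)
  note b = assms(6) and ka = assms(7) and d = assms(8,9)
  interpret prob_space P by fact
  have Emeas: "{\<omega> \<in> space P. Z \<omega> \<ge> C * (k' + M \<omega>) *
         sqrt (ln (1 / d') + D + ln (1 + M \<omega> / k'))} \<in> sets P" for k' d'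
  proof -
    have "(\<lambda>\<omega>. C * (k' + M \<omega>) * sqrt (ln (1 / d') + D + ln (1 + M \<omega> / k'))) \<in> borel_measurable P"
      using Mm by measurable
    then show ?thesis using Zm by (rule borel_measurable_le)
  qed
  consider "C = 0" | "C < 0" | "C > 0" "D < 0" | "C > 0" "D \<ge> 0" by linarith
  then show ?thesis
  proof cases
    case 1
    then show ?thesis using hyp[of 1 \<delta>] d by simp
  next
    case 2
    define d0 where "d0 = exp (- \<bar>D\<bar> - 1)"
    have d0: "0 < d0" "d0 < 1" unfolding d0_def by auto
    have False
    proof (rule no_hyp[OF P Zm Mm d0(2)])
      fix n :: nat
      define k' where "k' = real n / (- C) + 1"
      have k'0: "k' > 0" unfolding k'_def using 2 by (simp add: field_simps)
      have sub: "{\<omega>\<in>space P. - real n \<le> Z \<omega> \<and> M \<omega> \<le> real n} \<subseteq>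
        {\<omega> \<in> space P. Z \<omega> \<ge> C * (k' + M \<omega>) * sqrt (ln (1 / d0) + D + ln (1 + M \<omega> / k'))}"
      proof safe
        fix \<omega> assume w: "\<omega> \<in> space P" and z: "- real n \<le> Z \<omega>"
        have m: "M \<omega> \<ge> 0" using M0 w .
        have l: "ln (1 / d0) = \<bar>D\<bar> + 1" unfolding d0_def by (simp add: ln_div)
        have "0 \<le> ln (1 + M \<omega> / k')" using m k'0 by simp
        then have "1 \<le> ln (1 / d0) + D + ln (1 + M \<omega> / k')" using l by linarith
        then have S: "1 \<le> sqrt (ln (1 / d0) + D + ln (1 + M \<omega> / k'))" by simp
        have "k' \<le> (k' + M \<omega>) * sqrt (ln (1 / d0) + D + ln (1 + M \<omega> / k'))"
          using S m k'0 mult_mono[OF _ S, of k' "k' + M \<omega>"] by simp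
        then have "C * ((k' + M \<omega>) * sqrt (ln (1 / d0) + D + ln (1 + M \<omega> / k'))) \<le> C * k'"
          using 2 by (intro mult_left_mono_neg) auto
        also have "C * k' = - real n + C" unfolding k'_def using 2 by (simp add: field_simps)
        finally show "C * (k' + M \<omega>) * sqrt (ln (1 / d0) + D + ln (1 + M \<omega> / k')) \<le> Z \<omega>"
          using z 2 by (simp add: mult.assoc)
      qed
      have "measure P {\<omega>\<in>space P. - real n \<le> Z \<omega> \<and> M \<omega> \<le> real n} \<le>
        measure P {\<omega> \<in> space P. Z \<omega> \<ge> C * (k' + M \<omega>) * sqrt (ln (1 / d0) + D + ln (1 + M \<omega> / k'))}"
        by (rule finite_measure_mono[OF sub Emeas])
      also have "\<dots> \<le> d0" by (rule hyp[OF k'0 d0])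
      finally show "measure P {\<omega>\<in>space P. - real n \<le> Z \<omega> \<and> M \<omega> \<le> real n} \<le> d0" .
    qed
    then show ?thesis ..
  next
    case 3
    define d0 where "d0 = exp (D / 2)"
    have d0: "0 < d0" "d0 < 1" unfolding d0_def using 3 by auto
    define s0 where "s0 = sqrt (- D / 4)"
    have s0: "s0 > 0" unfolding s0_def using 3 by simp
    have False
    proof (rule no_hyp[OF P Zm Mm d0(2)])
      fix n :: nat
      define k' where "k' = real n * 4 / (- D) + real n / (C * s0) + 1"
      have a1: "real n * 4 / (- D) \<ge> 0" using 3 by (intro divide_nonneg_pos) auto
      have a2: "real n / (C * s0) \<ge> 0" using 3 s0 by simp
      have k'0: "k' > 0" unfolding k'_def using a1 a2 by linarith
      have sub: "{\<omega>\<in>space P. - real n \<le> Z \<omega> \<and> M \<omega> \<le> real n} \<subseteq>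
        {\<omega> \<in> space P. Z \<omega> \<ge> C * (k' + M \<omega>) * sqrt (ln (1 / d0) + D + ln (1 + M \<omega> / k'))}"
      proof safe
        fix \<omega> assume w: "\<omega> \<in> space P" and z: "- real n \<le> Z \<omega>" and mn: "M \<omega> \<le> real n"
        have m: "M \<omega> \<ge> 0" using M0 w .
        have l: "ln (1 / d0) = - D / 2" unfolding d0_def by (simp add: ln_div)
        have "ln (1 + M \<omega> / k') \<le> M \<omega> / k'" using m k'0 by (intro ln_add_one_self_le_self) simp
        also have "M \<omega> / k' \<le> real n / k'" using mn k'0 by (intro divide_right_mono) auto
        also have "real n / k' \<le> - D / 4"
        proof -
          have "real n * 4 / (- D) \<le> k'" unfolding k'_def using a2 by linarith
          moreover have nD: "- D > 0" using 3 by simp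
          ultimately have h: "real n * 4 \<le> k' * (- D)" using pos_divide_le_eq[OF nD] by blast
          have "real n \<le> (- D / 4) * k'" using h by (simp add: algebra_simps)
          then show ?thesis using k'0 pos_divide_le_eq[OF k'0] by blast
        qed
        finally have "ln (1 / d0) + D + ln (1 + M \<omega> / k') \<le> D / 4" using l by linarith
        then have "sqrt (ln (1 / d0) + D + ln (1 + M \<omega> / k')) \<le> sqrt (D / 4)" by simp
        also have "sqrt (D / 4) = - s0" unfolding s0_def by (simp add: real_sqrt_minus[symmetric])
        finally have S: "sqrt (ln (1 / d0) + D + ln (1 + M \<omega> / k')) \<le> - s0" .
        have "C * (k' + M \<omega>) * sqrt (ln (1 / d0) + D + ln (1 + M \<omega> / k')) \<le> C * (k' + M \<omega>) * (- s0)"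
          using S 3 k'0 m by (intro mult_left_mono) auto
        also have "\<dots> \<le> C * k' * (- s0)" using 3 s0 m by (simp add: algebra_simps)
        also have "C * k' * (- s0) \<le> - real n"
        proof -
          have "real n / (C * s0) \<le> k'" unfolding k'_def using a1 by linarith
          then have "real n \<le> k' * (C * s0)" using 3 s0 by (simp add: divide_le_eq)
          then show ?thesis by (simp add: algebra_simps)
        qed
        finally show "C * (k' + M \<omega>) * sqrt (ln (1 / d0) + D + ln (1 + M \<omega> / k')) \<le> Z \<omega>"
          using z by linarith
      qed
      have "measure P {\<omega>\<in>space P. - real n \<le> Z \<omega> \<and> M \<omega> \<le> real n} \<le>
        measure P {\<omega> \<in> space P. Z \<omega> \<ge> C * (k' + M \<omega>) * sqrt (ln (1 / d0) + D + ln (1 + M \<omega> / k'))}"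
        by (rule finite_measure_mono[OF sub Emeas])
      also have "\<dots> \<le> d0" by (rule hyp[OF k'0 d0])
      finally show "measure P {\<omega>\<in>space P. - real n \<le> Z \<omega> \<and> M \<omega> \<le> real n} \<le> d0" .
    qed
    then show ?thesis ..
  next
    case 4
    define dk where "dk k = 2 * \<delta> / ((real k + 2) * (real k + 3))" for k :: nat
    define E where "E k = {\<omega> \<in> space P. Z \<omega> \<ge> C * (\<kappa> * exp (real k) + M \<omega>) *
         sqrt (ln (1 / dk k) + D + ln (1 + M \<omega> / (\<kappa> * exp (real k))))}" for k :: nat
    define S where "S = {\<omega> \<in> space P. Z \<omega> \<ge> C * ((1 + \<beta>) * M \<omega> + \<kappa>) *
         sqrt (ln (2 / \<delta>) + 2 * lil (\<beta> * M \<omega> / \<kappa>) + D + ln (1 + exp 1 / \<beta>))}"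
    have dk: "0 < dk k" "dk k < 1" for k
    proof -
      show "0 < dk k" unfolding dk_def using d by simp
      have "(6::real) \<le> (real k + 2) * (real k + 3)" by (simp add: algebra_simps)
      then have "2 * \<delta> < (real k + 2) * (real k + 3)" using d by linarith
      then show "dk k < 1" unfolding dk_def by (simp add: divide_less_eq)
    qed
    have mE: "measure P (E k) \<le> dk k" for k
      unfolding E_def using hyp[of "\<kappa> * exp (real k)" "dk k"] ka dk by simp
    have Esets: "range E \<subseteq> sets P" unfolding E_def using Emeas by auto
    have fS: "(\<lambda>\<omega>. C * ((1 + \<beta>) * M \<omega> + \<kappa>) *
         sqrt (ln (2 / \<delta>) + 2 * lil (\<beta> * M \<omega> / \<kappa>) + D + ln (1 + exp 1 / \<beta>))) \<in> borel_measurable P"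
      using Mm by measurable
    have Ssets: "S \<in> sets P" unfolding S_def using fS Zm by (rule borel_measurable_le)
    have sub: "S \<subseteq> (\<Union>k. E k)"
    proof
      fix \<omega> assume "\<omega> \<in> S"
      then have w: "\<omega> \<in> space P" and z: "Z \<omega> \<ge> C * ((1 + \<beta>) * M \<omega> + \<kappa>) *
         sqrt (ln (2 / \<delta>) + 2 * lil (\<beta> * M \<omega> / \<kappa>) + D + ln (1 + exp 1 / \<beta>))" unfolding S_def by auto
      have "\<omega> \<in> E (nat \<lceil>ln (\<beta> * M \<omega> / \<kappa>) - 1\<rceil>)"
        unfolding E_def dk_def using w order_trans[OF key[OF 4(1) 4(2) b ka d M0[OF w]] z] by simp
      then show "\<omega> \<in> (\<Union>k. E k)" by blast
    qed
    have sdk: "dk sums \<delta>" unfolding dk_def by (rule dk_sums)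
    have summ: "summable (\<lambda>k. measure P (E k))"
      by (rule summable_comparison_test'[OF sums_summable[OF sdk], of 0]) (use mE in simp)
    have "measure P S \<le> measure P (\<Union>k. E k)"
      by (rule finite_measure_mono[OF sub]) (use Esets in auto)
    also have "\<dots> \<le> (\<Sum>k. measure P (E k))" by (rule finite_measure_subadditive_countably[OF Esets summ])
    also have "\<dots> \<le> (\<Sum>k. dk k)" by (rule suminf_le[OF mE summ sums_summable[OF sdk]])
    also have "\<dots> = \<delta>" using sdk by (simp add: sums_iff)
    finally show ?thesis unfolding S_def .
  qed
qed

end
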